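(* Fix $i\in[n]$ and $\mathbf{x}_{-i}\in\mathcal{C}_{-i}$, let $A=A(\mathbf{x}_{-i})$, $\mathcal{R}_A=\prod_{j\in A}(0,\omega_{ij}-\mathbf{x}_T^{j|i})$ and $\mathcal{V}_{\mathbf{x}_{-i}}((x_{ij})_{j\in A})=\sum_{j\in A}x_{ij}^{a_i}\mathcal{F}_{ij}(x_{ij}+\mathbf{x}_T^{j|i})$. Then the system of equations $\psi_{ij}(x_{ij};\mathbf{x}_T^{j|i})=0$, $j\in A$, has a unique solution in $\mathcal{R}_A$, and this solution is a global maximum of $\mathcal{V}_{\mathbf{x}_{-i}}$ on $\mathcal{R}_A$.
   Context: Fragile multi-CPR Game: $n,m\ge1$, $[k]=\{1,\dots,k\}$, $C_m=\{(x_1,\dots,x_m)\in[0,1]^m:\sum_j x_j\le1\}$, $\mathcal{C}_{-i}=\prod_{[n]\setminus\{i\}}C_m$; for $\mathbf{x}_{-i}=(\mathbf{x}_\ell)_{\ell\ne i}$ with $\mathbf{x}_\ell=(x_{\ell1},\dots,x_{\ell m})$ put $\mathbf{x}_T^{j|i}=\sum_{\ell\ne i}x_{\ell j}$. Each CPR $j$ has a return rate $\mathcal{R}_j(t)>1$ and failure probability $p_j(t)\in[0,1]$; each player $i$ has parameters $a_i,k_i$. Effective rate: $\mathcal{F}_{ij}(t)=(\mathcal{R}_j(t)-1)^{a_i}(1-p_j(t))-k_ip_j(t)$. Assumption: (1) $p_j(0)=0$, $p_j(t)=1$ for $t\ge1$; (2) $a_i\in(0,1]$, $k_i>0$; (3)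 each $\mathcal{F}_{ij}$ (continuous on $[0,1]$) has strictly negative first and second derivatives on $(0,1)$. Let $\omega_{ij}\in(0,1)$ be the unique zero of $\mathcal{F}_{ij}$ in $(0,1)$. Active CPRs: $A(\mathbf{x}_{-i})=\{j:\mathbf{x}_T^{j|i}<\omega_{ij}\}$. Define $\psi_{ij}(x;s)=x\,\mathcal{F}_{ij}'(x+s)+a_i\mathcal{F}_{ij}(x+s)$. *)

theory Defs
  imports "HOL-Analysis.Analysis"
begin

text \<open>Effective rate F_ij(t) = (R_j(t)-1)^(a_i) (1 - p_j(t)) - k_i p_j(t).
  R j, p j : return rate / failure probability of CPR j; a i, k i : player parameters.\<close>
definition Feff :: "(nat \<Rightarrow> real \<Rightarrow> real) \<Rightarrow> (nat \<Rightarrow> real \<Rightarrow> real) \<Rightarrow>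
    (nat \<Rightarrow> real) \<Rightarrow> (nat \<Rightarrow> real) \<Rightarrow> nat \<Rightarrow> nat \<Rightarrow> real \<Rightarrow> real" where
  "Feff R p a k i j t = (R j t - 1) powr (a i) * (1 - p j t) - k i * p j t"

definition omega :: "(nat \<Rightarrow> real \<Rightarrow> real) \<Rightarrow> (nat \<Rightarrow> real \<Rightarrow> real) \<Rightarrow>
    (nat \<Rightarrow> real) \<Rightarrow> (nat \<Rightarrow> real) \<Rightarrow> nat \<Rightarrow> nat \<Rightarrow> real" where
  "omega R p a k i j = (THE w. w \<in> {0<..<1} \<and> Feff R p a k i j w = 0)"

definition xT :: "nat \<Rightarrow> nat \<Rightarrow> (nat \<Rightarrow> nat \<Rightarrow> real) \<Rightarrow> nat \<Rightarrow> real" where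
  "xT n i x j = (\<Sum>l\<in>{1..n} - {i}. x l j)"

definition active :: "(nat \<Rightarrow> real \<Rightarrow> real) \<Rightarrow> (nat \<Rightarrow> real \<Rightarrow> real) \<Rightarrow>
    (nat \<Rightarrow> real) \<Rightarrow> (nat \<Rightarrow> real) \<Rightarrow> nat \<Rightarrow> nat \<Rightarrow> nat \<Rightarrow> (nat \<Rightarrow> nat \<Rightarrow> real) \<Rightarrow> nat set" where
  "active R p a k n m i x = {j \<in> {1..m}. xT n i x j < omega R p a k i j}"

definition psi :: "(nat \<Rightarrow> real \<Rightarrow> real) \<Rightarrow> (nat \<Rightarrow> real \<Rightarrow> real) \<Rightarrow>
    (nat \<Rightarrow> real) \<Rightarrow> (nat \<Rightarrow> real) \<Rightarrow> nat \<Rightarrow> nat \<Rightarrow> real \<Rightarrow> real \<Rightarrow> real" where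
  "psi R p a k i j y s = y * deriv (Feff R p a k i j) (y + s) + a i * Feff R p a k i j (y + s)"

definition regionA :: "(nat \<Rightarrow> real \<Rightarrow> real) \<Rightarrow> (nat \<Rightarrow> real \<Rightarrow> real) \<Rightarrow>
    (nat \<Rightarrow> real) \<Rightarrow> (nat \<Rightarrow> real) \<Rightarrow> nat \<Rightarrow> nat \<Rightarrow> nat \<Rightarrow> (nat \<Rightarrow> nat \<Rightarrow> real) \<Rightarrow> (nat \<Rightarrow> real) set" where
  "regionA R p a k n m i x =
     (\<Pi>\<^sub>E j\<in>active R p a k n m i x. {0<..<omega R p a k i j - xT n i x j})"

definition Vfun :: "(nat \<Rightarrow> real \<Rightarrow> real) \<Rightarrow> (nat \<Rightarrow> real \<Rightarrow> real) \<Rightarrow>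
    (nat \<Rightarrow> real) \<Rightarrow> (nat \<Rightarrow> real) \<Rightarrow> nat \<Rightarrow> nat \<Rightarrow> nat \<Rightarrow> (nat \<Rightarrow> nat \<Rightarrow> real) \<Rightarrow> (nat \<Rightarrow> real) \<Rightarrow> real" where
  "Vfun R p a k n m i x y =
     (\<Sum>j\<in>active R p a k n m i x. (y j) powr (a i) * Feff R p a k i j (y j + xT n i x j))"

end

theory Submission imports Defs begin

lemma one_dim:
  fixes F F1 F2 :: "real \<Rightarrow> real" and a s w :: real
  assumes d1: "\<And>t. t\<in>{0<..<1} \<Longrightarrow> (F has_real_derivative F1 t) (at t) \<and> F1 t < 0"
    and d2: "\<And>t. t\<in>{0<..<1} \<Longrightarrow> (F1 has_real_derivative F2 t) (at t) \<and> F2 t < 0"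
    and apos: "0 < a" and s0: "0 \<le> s" and sw: "s < w" and w1: "w < 1" and Fw: "F w = 0"
  defines "\<psi> \<equiv> (\<lambda>y. y * F1 (y + s) + a * F (y + s))"
  shows "\<exists>y\<in>{0<..<w-s}. \<psi> y = 0 \<and> (\<forall>z\<in>{0<..<w-s}. \<psi> z = 0 \<longrightarrow> z = y)
          \<and> (\<forall>z\<in>{0<..<w-s}. z powr a * F (z + s) \<le> y powr a * F (y + s))"
proof -
  define L where "L = w - s"
  have L0: "L > 0" using sw by (simp add: L_def)
  have Fdec: "F v < F u" if "0 < u" "u < v" "v < 1" for u v
  proof (rule DERIV_neg_imp_decreasing[of u v F])
    fix x assume "u \<le> x" "x \<le> v"
    hence "x \<in> {0<..<1}" using that by auto
    thus "\<exists>y. (F has_real_derivative y) (at x) \<and> y < 0" using d1 by blast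
  qed (use that in auto)
  have F1dec: "F1 v < F1 u" if "0 < u" "u < v" "v < 1" for u v
  proof (rule DERIV_neg_imp_decreasing[of u v F1])
    fix x assume "u \<le> x" "x \<le> v"
    hence "x \<in> {0<..<1}" using that by auto
    thus "\<exists>y. (F1 has_real_derivative y) (at x) \<and> y < 0" using d2 by blast
  qed (use that in auto)
  have psider: "(\<psi> has_real_derivative (F1 (y+s) + y * F2 (y+s) + a * F1 (y+s))) (at y)
        \<and> F1 (y+s) + y * F2 (y+s) + a * F1 (y+s) < 0" if "0 < y" "y \<le> L" for y
  proof -
    have t: "y + s \<in> {0<..<1}" using that s0 w1 by (auto simp: L_def)
    have a1: "((\<lambda>y. F (y + s)) has_real_derivative F1 (y+s)) (at y)"
      using d1[OF t] DERIV_shift by blast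
    have a2: "((\<lambda>y. F1 (y + s)) has_real_derivative F2 (y+s)) (at y)"
      using d2[OF t] DERIV_shift by blast
    have "(\<psi> has_real_derivative (1 * F1 (y+s) + y * F2 (y+s) + a * F1 (y+s))) (at y)"
    proof -
      have "((\<lambda>y. y * F1 (y + s)) has_real_derivative (1 * F1 (y+s) + F2 (y+s) * y)) (at y)"
        using DERIV_mult[OF DERIV_ident a2] by simp
      moreover have "((\<lambda>y. a * F (y + s)) has_real_derivative a * F1 (y+s)) (at y)"
        using DERIV_cmult[OF a1] by simp
      ultimately show ?thesis unfolding \<psi>_def using DERIV_add by (force simp: algebra_simps)
    qed
    moreover have "F1 (y+s) + y * F2 (y+s) + a * F1 (y+s) < 0"
    proof -
      have "y * F2 (y+s) < 0" using d2[OF t] that by (simp add: mult_pos_neg)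
      moreover have "a * F1 (y+s) < 0" using d1[OF t] apos by (simp add: mult_pos_neg)
      ultimately show ?thesis using d1[OF t] by linarith
    qed
    ultimately show ?thesis by simp
  qed
  have psidec: "\<psi> v < \<psi> u" if "0 < u" "u < v" "v \<le> L" for u v
  proof (rule DERIV_neg_imp_decreasing[of u v \<psi>])
    fix x assume "u \<le> x" "x \<le> v"
    thus "\<exists>y. (\<psi> has_real_derivative y) (at x) \<and> y < 0" using psider[of x] that by auto
  qed (use that in auto)
  have psicont: "continuous_on {u..L} \<psi>" if "0 < u" for u
  proof (intro continuous_at_imp_continuous_on ballI)
    fix x assume "x \<in> {u..L}"
    hence "0 < x" "x \<le> L" using that by auto
    thus "isCont \<psi> x" using psider[of x] DERIV_isCont by blast
  qed
  have psiL: "\<psi> L < 0"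
  proof -
    have "L + s = w" by (simp add: L_def)
    moreover have "w \<in> {0<..<1}" using s0 sw w1 by auto
    ultimately show ?thesis using d1[of w] L0 Fw by (simp add: \<psi>_def mult_pos_neg)
  qed
  define c where "c = L / 2"
  have c: "0 < c" "c < L" using L0 by (auto simp: c_def)
  have cs: "c + s \<in> {0<..<1}" "c + s < w" using c s0 w1 by (auto simp: L_def)
  define D where "D = - F1 (c + s)"
  define P where "P = a * F (c + s)"
  have D0: "D > 0" using d1[OF cs(1)] by (simp add: D_def)
  have Fcs: "F (c + s) > 0" using Fdec[of "c+s" w] cs Fw w1 by auto
  have P0: "P > 0" using Fcs apos by (simp add: P_def)
  define e where "e = min c (P / (2 * D))"
  have e0: "0 < e" "e \<le> c" using D0 P0 c by (auto simp: e_def)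
  have psie: "\<psi> e > 0"
  proof -
    have "F1 (e + s) \<ge> F1 (c + s)"
      using F1dec[of "e+s" "c+s"] e0 s0 cs by (cases "e = c") auto
    hence h1: "e * F1 (e + s) \<ge> - e * D" using e0 by (simp add: D_def mult_left_mono)
    have "F (e + s) \<ge> F (c + s)"
      using Fdec[of "e+s" "c+s"] e0 s0 cs by (cases "e = c") auto
    hence h2: "a * F (e + s) \<ge> P" using apos by (simp add: P_def)
    have "e * D \<le> P / 2"
    proof -
      have "e \<le> P / (2 * D)" by (simp add: e_def)
      hence "e * D \<le> P / (2 * D) * D" using D0 by (intro mult_right_mono) auto
      also have "\<dots> = P / 2" using D0 by simp
      finally show ?thesis .
    qed
    thus ?thesis using h1 h2 P0 unfolding \<psi>_def by linarith
  qed
  obtain y where y: "e \<le> y" "y \<le> L" "\<psi> y = 0"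
    using IVT2'[of \<psi> L 0 e] psiL psie e0 c psicont[OF e0(1)] by auto
  have yL: "y < L" using y psiL by (cases "y = L") auto
  have y0: "y > 0" using y e0 by auto
  have uniq: "\<forall>z\<in>{0<..<w-s}. \<psi> z = 0 \<longrightarrow> z = y"
  proof (intro ballI impI)
    fix z assume z: "z \<in> {0<..<w-s}" "\<psi> z = 0"
    show "z = y"
    proof (rule ccontr)
      assume "z \<noteq> y"
      hence "z < y \<or> y < z" by auto
      thus False using psidec[of z y] psidec[of y z] z y y0 yL by (auto simp: L_def)
    qed
  qed
  define g where "g = (\<lambda>t. t powr a * F (t + s))"
  have gder: "(g has_real_derivative t powr (a - 1) * \<psi> t) (at t)" if "0 < t" "t < L" for t
  proof -
    have tt: "t + s \<in> {0<..<1}" using that s0 w1 by (auto simp: L_def)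
    have a1: "((\<lambda>y. F (y + s)) has_real_derivative F1 (t+s)) (at t)"
      using d1[OF tt] DERIV_shift by blast
    have "(g has_real_derivative (a * t powr (a - 1) * F (t + s) + t powr a * F1 (t + s))) (at t)"
      unfolding g_def using DERIV_mult[OF has_real_derivative_powr[OF that(1), of a] a1]
      by (simp add: algebra_simps)
    moreover have "t powr a = t powr (a - 1) * t"
      using that powr_add[of t "a - 1" 1] by simp
    ultimately show ?thesis by (simp add: \<psi>_def algebra_simps)
  qed
  have gmax: "g z \<le> g y" if z: "z \<in> {0<..<w-s}" for z
  proof (cases "z \<le> y")
    case True
    show ?thesis
    proof (rule DERIV_nonneg_imp_nondecreasing[OF True])
      fix t assume t: "z \<le> t" "t \<le> y"
      have "\<psi> t \<ge> 0" using psidec[of t y] t y z by (cases "t = y") (auto simp: L_def)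
      thus "\<exists>d. (g has_real_derivative d) (at t) \<and> 0 \<le> d"
        using gder[of t] t z yL by (intro exI[of _ "t powr (a - 1) * \<psi> t"]) (auto simp: L_def)
    qed
  next
    case False
    show ?thesis
    proof (rule DERIV_nonpos_imp_nonincreasing[of y z])
      show "y \<le> z" using False by simp
      fix t assume t: "y \<le> t" "t \<le> z"
      have "\<psi> t \<le> 0" using psidec[of y t] t y y0 z by (cases "t = y") (auto simp: L_def)
      thus "\<exists>d. (g has_real_derivative d) (at t) \<and> d \<le> 0"
        using gder[of t] t z y0 by (intro exI[of _ "t powr (a - 1) * \<psi> t"])
          (auto simp: L_def mult_nonneg_nonpos)
    qed
  qed
  have ym: "y \<in> {0<..<w-s}" using y0 yL by (simp add: L_def)
  show ?thesis
    using ym y(3) uniq gmax unfolding g_def by blast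
qed

lemma omega_props:
  fixes F F1 :: "real \<Rightarrow> real"
  assumes cont: "continuous_on {0..1} F"
    and d1: "\<And>t. t\<in>{0<..<1} \<Longrightarrow> (F has_real_derivative F1 t) (at t) \<and> F1 t < 0"
    and F0: "F 0 > 0" and F1: "F 1 < 0"
  shows "(THE w. w \<in> {0<..<1} \<and> F w = 0) \<in> {0<..<1} \<and> F (THE w. w \<in> {0<..<1} \<and> F w = 0) = 0"
proof -
  have dec: "F v < F u" if "0 \<le> u" "u < v" "v \<le> 1" for u v
  proof (rule DERIV_neg_imp_decreasing_open[of u v F])
    fix x assume "u < x" "x < v"
    hence "x \<in> {0<..<1}" using that by auto
    thus "\<exists>y. (F has_real_derivative y) (at x) \<and> y < 0" using d1 by blast
  next
    show "continuous_on {u..v} F" using that by (intro continuous_on_subset[OF cont]) auto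
  qed (use that in auto)
  obtain w where w: "0 \<le> w" "w \<le> 1" "F w = 0"
    using IVT2'[of F 1 0 0] F0 F1 cont by force
  have w01: "w \<in> {0<..<1}" using w F0 F1 by (cases "w = 0"; cases "w = 1") auto
  have ex: "\<exists>!w. w \<in> {0<..<1} \<and> F w = 0"
  proof (rule ex1I[of _ w])
    show "w \<in> {0<..<1} \<and> F w = 0" using w01 w by simp
    fix v assume v: "v \<in> {0<..<1} \<and> F v = 0"
    show "v = w"
    proof (rule ccontr)
      assume "v \<noteq> w"
      hence "v < w \<or> w < v" by auto
      thus False using dec[of v w] dec[of w v] v w01 w by auto
    qed
  qed
  show ?thesis using theI'[OF ex] by blast
qed

theorem lemma2:
  fixes n m i :: nat
    and R p :: "nat \<Rightarrow> real \<Rightarrow> real"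
    and a k :: "nat \<Rightarrow> real"
    and x :: "nat \<Rightarrow> nat \<Rightarrow> real"
  assumes "n \<ge> 1" and "m \<ge> 1"
    and R_gt: "\<And>j t. j \<in> {1..m} \<Longrightarrow> t \<ge> 0 \<Longrightarrow> R j t > 1"
    and p_range: "\<And>j t. j \<in> {1..m} \<Longrightarrow> t \<ge> 0 \<Longrightarrow> p j t \<in> {0..1}"
    and p0: "\<And>j. j \<in> {1..m} \<Longrightarrow> p j 0 = 0"
    and p1: "\<And>j t. j \<in> {1..m} \<Longrightarrow> t \<ge> 1 \<Longrightarrow> p j t = 1"
    and a_range: "\<And>l. l \<in> {1..n} \<Longrightarrow> a l \<in> {0<..1}"
    and k_pos: "\<And>l. l \<in> {1..n} \<Longrightarrow> k l > 0"
    and F_cont: "\<And>l j. l \<in> {1..n} \<Longrightarrow> j \<in> {1..m} \<Longrightarrow>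
                   continuous_on {0..1} (Feff R p a k l j)"
    and F_d1: "\<And>l j t. l \<in> {1..n} \<Longrightarrow> j \<in> {1..m} \<Longrightarrow> t \<in> {0<..<1} \<Longrightarrow>
                 (Feff R p a k l j has_real_derivative deriv (Feff R p a k l j) t) (at t)
                 \<and> deriv (Feff R p a k l j) t < 0"
    and F_d2: "\<And>l j t. l \<in> {1..n} \<Longrightarrow> j \<in> {1..m} \<Longrightarrow> t \<in> {0<..<1} \<Longrightarrow>
                 (deriv (Feff R p a k l j) has_real_derivative
                    deriv (deriv (Feff R p a k l j)) t) (at t)
                 \<and> deriv (deriv (Feff R p a k l j)) t < 0"
    and i_in: "i \<in> {1..n}"
    and x_in: "\<And>l. l \<in> {1..n} - {i} \<Longrightarrow>
                 (\<forall>j\<in>{1..m}. x l j \<in> {0..1}) \<and> (\<Sum>j\<in>{1..m}. x l j) \<le> 1"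
  shows "\<exists>y. y \<in> regionA R p a k n m i x
           \<and> (\<forall>j\<in>active R p a k n m i x. psi R p a k i j (y j) (xT n i x j) = 0)
           \<and> (\<forall>z\<in>regionA R p a k n m i x.
                (\<forall>j\<in>active R p a k n m i x. psi R p a k i j (z j) (xT n i x j) = 0) \<longrightarrow> z = y)
           \<and> (\<forall>z\<in>regionA R p a k n m i x. Vfun R p a k n m i x z \<le> Vfun R p a k n m i x y)"
proof -
  let ?A = "active R p a k n m i x"
  have ai: "0 < a i" using a_range[OF i_in] by auto
  have per: "\<exists>y\<in>{0<..<omega R p a k i j - xT n i x j}.
      psi R p a k i j y (xT n i x j) = 0
      \<and> (\<forall>z\<in>{0<..<omega R p a k i j - xT n i x j}. psi R p a k i j z (xT n i x j) = 0 \<longrightarrow> z = y)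
      \<and> (\<forall>z\<in>{0<..<omega R p a k i j - xT n i x j}.
           z powr a i * Feff R p a k i j (z + xT n i x j) \<le> y powr a i * Feff R p a k i j (y + xT n i x j))"
    if jA: "j \<in> ?A" for j
  proof -
    have j: "j \<in> {1..m}" using jA by (simp add: active_def)
    have sw: "xT n i x j < omega R p a k i j" using jA by (simp add: active_def)
    have s0: "0 \<le> xT n i x j" unfolding xT_def using x_in j by (intro sum_nonneg) auto
    have F0: "Feff R p a k i j 0 > 0"
      using R_gt[OF j, of 0] p0[OF j] by (simp add: Feff_def)
    have F1: "Feff R p a k i j 1 < 0"
      using p1[OF j, of 1] k_pos[OF i_in] by (simp add: Feff_def)
    have om: "omega R p a k i j \<in> {0<..<1} \<and> Feff R p a k i j (omega R p a k i j) = 0"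
      unfolding omega_def
      by (rule omega_props[OF F_cont[OF i_in j] F_d1[OF i_in j] F0 F1])
    show ?thesis
      using one_dim[of "Feff R p a k i j" "deriv (Feff R p a k i j)" "deriv (deriv (Feff R p a k i j))"
          "a i" "xT n i x j" "omega R p a k i j", OF F_d1[OF i_in j] F_d2[OF i_in j] ai s0 sw]
        om unfolding psi_def by auto
  qed
  then obtain Y where Y: "\<And>j. j \<in> ?A \<Longrightarrow> Y j \<in> {0<..<omega R p a k i j - xT n i x j}
      \<and> psi R p a k i j (Y j) (xT n i x j) = 0
      \<and> (\<forall>z\<in>{0<..<omega R p a k i j - xT n i x j}. psi R p a k i j z (xT n i x j) = 0 \<longrightarrow> z = Y j)
      \<and> (\<forall>z\<in>{0<..<omega R p a k i j - xT n i x j}.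
           z powr a i * Feff R p a k i j (z + xT n i x j) \<le> Y j powr a i * Feff R p a k i j (Y j + xT n i x j))"
    by metis
  define y where "y = restrict Y ?A"
  have yreg: "y \<in> regionA R p a k n m i x"
    unfolding regionA_def y_def using Y by auto
  show ?thesis
  proof (intro exI[of _ y] conjI ballI impI)
    show "y \<in> regionA R p a k n m i x" by (rule yreg)
  next
    fix j assume "j \<in> ?A"
    thus "psi R p a k i j (y j) (xT n i x j) = 0" using Y by (simp add: y_def)
  next
    fix z assume z: "z \<in> regionA R p a k n m i x"
      and zs: "\<forall>j\<in>?A. psi R p a k i j (z j) (xT n i x j) = 0"
    show "z = y"
    proof
      fix j show "z j = y j"
      proof (cases "j \<in> ?A")
        case True
        have "z j \<in> {0<..<omega R p a k i j - xT n i x j}" using z True by (auto simp: regionA_def)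
        thus ?thesis using Y[OF True] zs True by (simp add: y_def)
      next
        case False
        thus ?thesis using z by (auto simp: regionA_def y_def PiE_def extensional_def)
      qed
    qed
  next
    fix z assume z: "z \<in> regionA R p a k n m i x"
    show "Vfun R p a k n m i x z \<le> Vfun R p a k n m i x y"
      unfolding Vfun_def
    proof (rule sum_mono)
      fix j assume jA: "j \<in> ?A"
      have "z j \<in> {0<..<omega R p a k i j - xT n i x j}" using z jA by (auto simp: regionA_def)
      thus "z j powr a i * Feff R p a k i j (z j + xT n i x j)
            \<le> y j powr a i * Feff R p a k i j (y j + xT n i x j)"
        using Y[OF jA] jA by (simp add: y_def)
    qed
  qed
qed

end
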